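(* Let $(M,\mathcal F,D,g)$ be a foliated Hessian structure of constant normal Hessian sectional curvature $c$. Then the foliated Riemannian manifold $(M,\mathcal F,g)$ is modeled on a space form of constant sectional curvature $-\frac c4$, i.e. the normal Riemannian metric $g$ (equivalently the induced transverse metric) has constant sectional curvature $-\frac c4$.
   Context: $N(M,\mathcal F)=TM/T\mathcal F$. Foliated Hessian structure $(D,g)$: $D$ a flat torsion-free foliated connection in the normal bundle (adapted foliated affine coordinates $(x,y)$: adapted charts with affine transverse coordinate changes and $\overline{\partial/\partial y^i}$ $D$-parallel), $g$ a foliated Riemannian metric in the normal bundle with locally $g_{ij}=\partial^2h/\partial y^i\partial y^j$ for a function $h$ of $y$ only. $\gamma=\nabla-D$ with $\nabla$ the normal Levi-Civita connection of $g$; $Q=D\gamma$, $Q^i_{jkl}=\partial\gamma^i_{jl}/\partial y^k$, indices raised/lowered by $g$. $\hat Q(\xi)^{ik}=Q^i{}_j{}^k{}_l\xi^{jl}$ on symmetric contravariant normal 2-tensors $\xi$; the normal Hessian sectional curvature is $q(\xi)=\langle\hat Q(\xi),\xi\rangle/\langle\xi,\xi\rangle$, inner product induced by $g$; constant $c$ means $q\equiv c$. *)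

theory Defs
  imports "HOL-Analysis.Analysis"
begin

text \<open>Local model: transverse affine coordinates y ranging over an open set U of
  real^'n (the normal bundle has rank CARD('n)). All tensors are given by their
  components in the D-parallel frame of coordinate vector fields.\<close>

definition pd :: "'n::finite \<Rightarrow> (real^'n \<Rightarrow> real) \<Rightarrow> real^'n \<Rightarrow> real" where
  "pd i f y = frechet_derivative f (at y) (axis i 1)"

fun Ck_on :: "nat \<Rightarrow> (real^'n::finite) set \<Rightarrow> (real^'n \<Rightarrow> real) \<Rightarrow> bool" where
  "Ck_on 0 U f = continuous_on U f"
| "Ck_on (Suc k) U f = (f differentiable_on U \<and> (\<forall>i. Ck_on k U (pd i f)))"

definition smooth_on :: "(real^'n::finite) set \<Rightarrow> (real^'n \<Rightarrow> real) \<Rightarrow> bool" where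
  "smooth_on U f = (\<forall>k. Ck_on k U f)"

definition hess_metric :: "(real^'n::finite \<Rightarrow> real) \<Rightarrow> 'n \<Rightarrow> 'n \<Rightarrow> real^'n \<Rightarrow> real" where
  "hess_metric h i j = pd i (pd j h)"

definition metric_mat :: "('n::finite \<Rightarrow> 'n \<Rightarrow> real^'n \<Rightarrow> real) \<Rightarrow> real^'n \<Rightarrow> real^'n^'n" where
  "metric_mat g y = (\<chi> i j. g i j y)"

definition ginv :: "('n::finite \<Rightarrow> 'n \<Rightarrow> real^'n \<Rightarrow> real) \<Rightarrow> 'n \<Rightarrow> 'n \<Rightarrow> real^'n \<Rightarrow> real" where
  "ginv g i j y = matrix_inv (metric_mat g y) $ i $ j"

definition LC :: "('n::finite \<Rightarrow> 'n \<Rightarrow> real^'n \<Rightarrow> real) \<Rightarrow> 'n \<Rightarrow> 'n \<Rightarrow> 'n \<Rightarrow> real^'n \<Rightarrow> real" where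
  "LC g i j k y = (1/2) * (\<Sum>l\<in>UNIV. ginv g i l y *
       (pd j (g l k) y + pd k (g l j) y - pd l (g j k) y))"

text \<open>gamma = nabla - D; D has vanishing Christoffel symbols in affine coordinates.\<close>
definition gam :: "('n::finite \<Rightarrow> 'n \<Rightarrow> real^'n \<Rightarrow> real) \<Rightarrow> 'n \<Rightarrow> 'n \<Rightarrow> 'n \<Rightarrow> real^'n \<Rightarrow> real" where
  "gam g i j k y = LC g i j k y - 0"

definition Qt :: "('n::finite \<Rightarrow> 'n \<Rightarrow> real^'n \<Rightarrow> real) \<Rightarrow> 'n \<Rightarrow> 'n \<Rightarrow> 'n \<Rightarrow> 'n \<Rightarrow> real^'n \<Rightarrow> real" where
  "Qt g i j k l y = pd k (gam g i j l) y"

definition Qup :: "('n::finite \<Rightarrow> 'n \<Rightarrow> real^'n \<Rightarrow> real) \<Rightarrow> 'n \<Rightarrow> 'n \<Rightarrow> 'n \<Rightarrow> 'n \<Rightarrow> real^'n \<Rightarrow> real" where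
  "Qup g i j k l y = (\<Sum>m\<in>UNIV. Qt g i j m l y * ginv g m k y)"

definition Qhat :: "('n::finite \<Rightarrow> 'n \<Rightarrow> real^'n \<Rightarrow> real) \<Rightarrow> real^'n \<Rightarrow> ('n \<Rightarrow> 'n \<Rightarrow> real) \<Rightarrow> 'n \<Rightarrow> 'n \<Rightarrow> real" where
  "Qhat g y \<xi> i k = (\<Sum>j\<in>UNIV. \<Sum>l\<in>UNIV. Qup g i j k l y * \<xi> j l)"

definition tinner :: "('n::finite \<Rightarrow> 'n \<Rightarrow> real^'n \<Rightarrow> real) \<Rightarrow> real^'n \<Rightarrow> ('n \<Rightarrow> 'n \<Rightarrow> real) \<Rightarrow> ('n \<Rightarrow> 'n \<Rightarrow> real) \<Rightarrow> real" where
  "tinner g y \<xi> \<eta> = (\<Sum>i\<in>UNIV. \<Sum>k\<in>UNIV. \<Sum>a\<in>UNIV. \<Sum>b\<in>UNIV.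
       g i a y * g k b y * \<xi> i k * \<eta> a b)"

definition hess_sec_curv :: "('n::finite \<Rightarrow> 'n \<Rightarrow> real^'n \<Rightarrow> real) \<Rightarrow> real^'n \<Rightarrow> ('n \<Rightarrow> 'n \<Rightarrow> real) \<Rightarrow> real" where
  "hess_sec_curv g y \<xi> = tinner g y (Qhat g y \<xi>) \<xi> / tinner g y \<xi> \<xi>"

definition sym_tensor :: "('n \<Rightarrow> 'n \<Rightarrow> real) \<Rightarrow> bool" where
  "sym_tensor \<xi> = (\<forall>i j. \<xi> i j = \<xi> j i)"

text \<open>Riemann tensor: R(d_k, d_l) d_j = sum_i Rm i j k l d_i, with
  R(X,Y)Z = nabla_X nabla_Y Z - nabla_Y nabla_X Z - nabla_[X,Y] Z.\<close>
definition Rm :: "('n::finite \<Rightarrow> 'n \<Rightarrow> real^'n \<Rightarrow> real) \<Rightarrow> 'n \<Rightarrow> 'n \<Rightarrow> 'n \<Rightarrow> 'n \<Rightarrow> real^'n \<Rightarrow> real" where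
  "Rm g i j k l y = pd k (LC g i l j) y - pd l (LC g i k j) y
     + (\<Sum>m\<in>UNIV. LC g i k m y * LC g m l j y - LC g i l m y * LC g m k j y)"

definition gform :: "('n::finite \<Rightarrow> 'n \<Rightarrow> real^'n \<Rightarrow> real) \<Rightarrow> real^'n \<Rightarrow> real^'n \<Rightarrow> real^'n \<Rightarrow> real" where
  "gform g y X Y = (\<Sum>i\<in>UNIV. \<Sum>j\<in>UNIV. g i j y * X$i * Y$j)"

definition sec_curv :: "('n::finite \<Rightarrow> 'n \<Rightarrow> real^'n \<Rightarrow> real) \<Rightarrow> real^'n \<Rightarrow> real^'n \<Rightarrow> real^'n \<Rightarrow> real" where
  "sec_curv g y X Y =
     (\<Sum>a\<in>UNIV. \<Sum>i\<in>UNIV. \<Sum>j\<in>UNIV. \<Sum>k\<in>UNIV. \<Sum>l\<in>UNIV.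
        g i a y * Rm g i j k l y * X$k * Y$l * Y$j * X$a)
     / (gform g y X X * gform g y Y Y - (gform g y X Y)^2)"

end

theory Submission
  imports Defs
begin

lemma pd_eq: "(f has_derivative f') (at y) \<Longrightarrow> pd i f y = f' (axis i 1)"
  unfolding pd_def by (metis frechet_derivative_at)

lemma fd_works: "f differentiable (at y) \<Longrightarrow> (f has_derivative frechet_derivative f (at y)) (at y)"
  using frechet_derivative_works by blast

lemma pd_local:
  assumes "open U" "y \<in> U" "\<forall>x\<in>U. f x = g x"
  shows "pd i f y = pd i g y"
proof -
  have "\<And>f'. (f has_derivative f') (at y) \<longleftrightarrow> (g has_derivative f') (at y)"
    using assms has_derivative_transform_within_open[OF _ assms(1,2)] by metis
  then show ?thesis unfolding pd_def frechet_derivative_def by simp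
qed

lemma pd_mult:
  assumes "f differentiable (at y)" "g differentiable (at y)"
  shows "pd i (\<lambda>x. f x * g x) y = pd i f y * g y + f y * pd i g y"
proof -
  have "((\<lambda>x. f x * g x) has_derivative (\<lambda>h. f y * frechet_derivative g (at y) h + frechet_derivative f (at y) h * g y)) (at y)"
    by (rule has_derivative_mult[OF fd_works[OF assms(1)] fd_works[OF assms(2)]])
  note d = this
  show ?thesis unfolding pd_eq[OF d] by (simp add: pd_def)
qed

lemma pd_sum:
  assumes "\<And>a. a \<in> S \<Longrightarrow> f a differentiable (at y)"
  shows "pd i (\<lambda>x. \<Sum>a\<in>S. f a x) y = (\<Sum>a\<in>S. pd i (f a) y)"
proof -
  have "((\<lambda>x. \<Sum>a\<in>S. f a x) has_derivative (\<lambda>h. \<Sum>a\<in>S. frechet_derivative (f a) (at y) h)) (at y)"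
    by (rule has_derivative_sum) (use fd_works assms in auto)
  note d = this
  show ?thesis unfolding pd_eq[OF d] by (simp add: pd_def)
qed

lemma pd_cmult:
  assumes "f differentiable (at y)"
  shows "pd i (\<lambda>x. c * f x) y = c * pd i f y"
proof -
  have "((\<lambda>x. c * f x) has_derivative (\<lambda>h. c * frechet_derivative f (at y) h)) (at y)"
    by (rule has_derivative_mult_right[OF fd_works[OF assms]])
  note d = this
  show ?thesis unfolding pd_eq[OF d] by (simp add: pd_def)
qed

lemma pd_diff:
  assumes "f differentiable (at y)" "g differentiable (at y)"
  shows "pd i (\<lambda>x. f x - g x) y = pd i f y - pd i g y"
proof -
  have "((\<lambda>x. f x - g x) has_derivative (\<lambda>h. frechet_derivative f (at y) h - frechet_derivative g (at y) h)) (at y)"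
    by (rule has_derivative_diff[OF fd_works[OF assms(1)] fd_works[OF assms(2)]])
  note d = this
  show ?thesis unfolding pd_eq[OF d] by (simp add: pd_def)
qed

lemma diff_prod_at:
  fixes f :: "'i \<Rightarrow> real^'n::finite \<Rightarrow> real"
  assumes "\<And>a. a \<in> S \<Longrightarrow> f a differentiable (at y)"
  shows "(\<lambda>x. \<Prod>a\<in>S. f a x) differentiable (at y)"
  using has_derivative_prod[of S f "\<lambda>a. frechet_derivative (f a) (at y)" y UNIV] fd_works assms
  unfolding differentiable_def by blast

lemma diff_sum_at:
  fixes f :: "'i \<Rightarrow> real^'n::finite \<Rightarrow> real"
  assumes "\<And>a. a \<in> S \<Longrightarrow> f a differentiable (at y)"
  shows "(\<lambda>x. \<Sum>a\<in>S. f a x) differentiable (at y)"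
  using has_derivative_sum[of S f "\<lambda>a. frechet_derivative (f a) (at y)" "at y"] fd_works assms
  unfolding differentiable_def by blast

lemma Ck_pd: "Ck_on (Suc k) U f \<Longrightarrow> Ck_on k U (pd i f)" by simp

lemma smooth_pd: "smooth_on U f \<Longrightarrow> smooth_on U (pd i f)"
  unfolding smooth_on_def using Ck_pd by blast

lemma smooth_diff: "smooth_on U f \<Longrightarrow> f differentiable_on U"
  unfolding smooth_on_def by (metis Ck_on.simps(2))

lemma smooth_cont: "smooth_on U f \<Longrightarrow> continuous_on U f"
  unfolding smooth_on_def by (metis Ck_on.simps(1))

lemma smooth_diff_at: "open U \<Longrightarrow> smooth_on U f \<Longrightarrow> y \<in> U \<Longrightarrow> f differentiable (at y)"
  using smooth_diff by (metis at_within_open differentiable_on_def)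

lemma smooth_isCont: "open U \<Longrightarrow> smooth_on U f \<Longrightarrow> y \<in> U \<Longrightarrow> isCont f y"
  using smooth_cont continuous_on_eq_continuous_at by blast

lemma line_deriv:
  fixes f :: "real^'n::finite \<Rightarrow> real"
  assumes "f differentiable (at (a + s *\<^sub>R e))"
  shows "((\<lambda>s. f (a + s *\<^sub>R e)) has_real_derivative frechet_derivative f (at (a + s *\<^sub>R e)) e) (at s)"
proof -
  have l: "((\<lambda>s. a + s *\<^sub>R e) has_derivative (\<lambda>h. h *\<^sub>R e)) (at s)"
    by (auto intro!: derivative_eq_intros)
  have "((\<lambda>s. f (a + s *\<^sub>R e)) has_derivative (\<lambda>h. frechet_derivative f (at (a + s *\<^sub>R e)) (h *\<^sub>R e))) (at s)"
    using diff_chain_at[OF l fd_works[OF assms]] by (simp add: o_def)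
  moreover have "linear (frechet_derivative f (at (a + s *\<^sub>R e)))"
    using fd_works[OF assms] has_derivative_linear by blast
  ultimately have "((\<lambda>s. f (a + s *\<^sub>R e)) has_derivative (\<lambda>h. h * frechet_derivative f (at (a + s *\<^sub>R e)) e)) (at s)"
    by (simp add: linear_scale)
  moreover have "(\<lambda>h. h * frechet_derivative f (at (a + s *\<^sub>R e)) e) = (*) (frechet_derivative f (at (a + s *\<^sub>R e)) e)"
    by (auto simp: fun_eq_iff)
  ultimately show ?thesis
    unfolding has_field_derivative_def by simp
qed


lemma in_ball2:
  fixes y :: "real^'n::finite"
  assumes "ball y r \<subseteq> U" "2*t < r" "0 \<le> s" "s \<le> t" "0 \<le> u" "u \<le> t"
  shows "y + s *\<^sub>R axis i 1 + u *\<^sub>R axis j 1 \<in> U"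
proof -
  have "norm (s *\<^sub>R axis i (1::real) + u *\<^sub>R axis j 1) \<le> norm (s *\<^sub>R axis i (1::real)) + norm (u *\<^sub>R axis j (1::real))"
    by (rule norm_triangle_ineq)
  also have "\<dots> = s + u" using assms by (simp add: norm_axis_1)
  moreover have "dist y (y + s *\<^sub>R axis i 1 + u *\<^sub>R axis j 1) = norm (s *\<^sub>R axis i (1::real) + u *\<^sub>R axis j 1)"
    by (simp add: dist_norm norm_minus_commute add.assoc add.commute)
  ultimately have "dist y (y + s *\<^sub>R axis i 1 + u *\<^sub>R axis j 1) < r"
    using assms by simp
  then show ?thesis using assms by auto
qed

lemma delta_rep:
  fixes f :: "real^'n::finite \<Rightarrow> real"
  assumes U: "open U" and sm: "smooth_on U f" and b: "ball y r \<subseteq> U" and t: "0 < t" "2*t < r"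
  shows "\<exists>P. norm (P - y) \<le> 2*t \<and>
     f (y + t *\<^sub>R axis i 1 + t *\<^sub>R axis j 1) - f (y + t *\<^sub>R axis i 1) - f (y + t *\<^sub>R axis j 1) + f y
       = t^2 * pd j (pd i f) P"
proof -
  define ei :: "real^'n" where "ei = axis i 1"
  define ej :: "real^'n" where "ej = axis j 1"
  have inU: "\<And>s u. 0 \<le> s \<Longrightarrow> s \<le> t \<Longrightarrow> 0 \<le> u \<Longrightarrow> u \<le> t \<Longrightarrow> y + s *\<^sub>R ei + u *\<^sub>R ej \<in> U"
    unfolding ei_def ej_def using in_ball2[OF b t(2)] by blast
  have inU2: "\<And>s u. 0 \<le> s \<Longrightarrow> s \<le> t \<Longrightarrow> 0 \<le> u \<Longrightarrow> u \<le> t \<Longrightarrow> y + u *\<^sub>R ej + s *\<^sub>R ei \<in> U"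
    using inU by (simp add: add_ac)
  define \<phi> where "\<phi> s = f (y + t *\<^sub>R ej + s *\<^sub>R ei) - f (y + s *\<^sub>R ei)" for s
  have d\<phi>: "(\<phi> has_real_derivative (pd i f (y + t *\<^sub>R ej + s *\<^sub>R ei) - pd i f (y + s *\<^sub>R ei))) (at s)"
    if "0 \<le> s" "s \<le> t" for s
  proof -
    have a: "f differentiable (at (y + t *\<^sub>R ej + s *\<^sub>R ei))"
      using inU2[of s t] that t smooth_diff_at[OF U sm] by auto
    have b: "f differentiable (at (y + s *\<^sub>R ei))"
      using inU2[of s 0] that t smooth_diff_at[OF U sm] by auto
    show ?thesis unfolding \<phi>_def pd_def ei_def
      using DERIV_diff[OF line_deriv[OF a] line_deriv[OF b]] by (simp add: ei_def)
  qed
  obtain s1 where s1: "0 < s1" "s1 < t"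
    "\<phi> t - \<phi> 0 = (t - 0) * (pd i f (y + t *\<^sub>R ej + s1 *\<^sub>R ei) - pd i f (y + s1 *\<^sub>R ei))"
  proof -
    have "\<exists>z>0. z < t \<and> \<phi> t - \<phi> 0 = (t - 0) * (\<lambda>s. pd i f (y + t *\<^sub>R ej + s *\<^sub>R ei) - pd i f (y + s *\<^sub>R ei)) z"
      by (rule MVT2[OF t(1)]) (rule d\<phi>, auto)
    then show ?thesis using that by auto
  qed
  define \<psi> where "\<psi> u = pd i f (y + s1 *\<^sub>R ei + u *\<^sub>R ej)" for u
  have smi: "smooth_on U (pd i f)" by (rule smooth_pd[OF sm])
  have d\<psi>: "(\<psi> has_real_derivative pd j (pd i f) (y + s1 *\<^sub>R ei + u *\<^sub>R ej)) (at u)"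
    if "0 \<le> u" "u \<le> t" for u
  proof -
    have a: "pd i f differentiable (at (y + s1 *\<^sub>R ei + u *\<^sub>R ej))"
      using inU[of s1 u] that s1 smooth_diff_at[OF U smi] by auto
    show ?thesis unfolding \<psi>_def pd_def[of j] ej_def
      using line_deriv[OF a[unfolded ej_def]] by simp
  qed
  obtain u1 where u1: "0 < u1" "u1 < t"
    "\<psi> t - \<psi> 0 = (t - 0) * pd j (pd i f) (y + s1 *\<^sub>R ei + u1 *\<^sub>R ej)"
  proof -
    have "\<exists>z>0. z < t \<and> \<psi> t - \<psi> 0 = (t - 0) * (\<lambda>u. pd j (pd i f) (y + s1 *\<^sub>R ei + u *\<^sub>R ej)) z"
      by (rule MVT2[OF t(1)]) (rule d\<psi>, auto)
    then show ?thesis using that by auto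
  qed
  define P where "P = y + s1 *\<^sub>R ei + u1 *\<^sub>R ej"
  have "P - y = s1 *\<^sub>R ei + u1 *\<^sub>R ej" unfolding P_def by simp
  then have "norm (P - y) \<le> norm (s1 *\<^sub>R ei) + norm (u1 *\<^sub>R ej)"
    using norm_triangle_ineq by metis
  also have "\<dots> = s1 + u1" using s1 u1 by (simp add: ei_def ej_def norm_axis_1)
  finally have nP: "norm (P - y) \<le> 2*t" using s1 u1 by linarith
  have "\<psi> t = pd i f (y + t *\<^sub>R ej + s1 *\<^sub>R ei)" unfolding \<psi>_def by (simp add: add_ac)
  moreover have "\<psi> 0 = pd i f (y + s1 *\<^sub>R ei)" unfolding \<psi>_def by simp
  ultimately have "\<phi> t - \<phi> 0 = t * (t * pd j (pd i f) P)"
    using s1(3) u1(3) unfolding P_def by simp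
  moreover have "\<phi> t - \<phi> 0 = f (y + t *\<^sub>R ei + t *\<^sub>R ej) - f (y + t *\<^sub>R ei) - f (y + t *\<^sub>R ej) + f y"
    unfolding \<phi>_def by (simp add: add_ac)
  ultimately show ?thesis using nP unfolding ei_def ej_def
    by (intro exI[of _ P]) (simp add: power2_eq_square)
qed

lemma abs_contra: "\<bar>(a::real) - b\<bar> < \<bar>b - c\<bar> / 2 \<Longrightarrow> \<bar>a - c\<bar> < \<bar>b - c\<bar> / 2 \<Longrightarrow> False"
  by (auto simp: abs_if split: if_splits)

lemma schwarz:
  fixes f :: "real^'n::finite \<Rightarrow> real"
  assumes U: "open U" and sm: "smooth_on U f" and y: "y \<in> U"
  shows "pd j (pd i f) y = pd i (pd j f) y"
proof (rule ccontr)
  assume ne: "pd j (pd i f) y \<noteq> pd i (pd j f) y"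
  define e where "e = \<bar>pd j (pd i f) y - pd i (pd j f) y\<bar> / 2"
  have e: "e > 0" using ne unfolding e_def by simp
  obtain r where r: "r > 0" "ball y r \<subseteq> U" using U y open_contains_ball by blast
  have c1: "isCont (pd j (pd i f)) y" using smooth_isCont[OF U smooth_pd[OF smooth_pd[OF sm]] y] .
  have c2: "isCont (pd i (pd j f)) y" using smooth_isCont[OF U smooth_pd[OF smooth_pd[OF sm]] y] .
  obtain d1 where d1: "d1 > 0" "\<And>x. dist x y < d1 \<Longrightarrow> dist (pd j (pd i f) x) (pd j (pd i f) y) < e"
    using c1 e unfolding continuous_at_eps_delta by blast
  obtain d2 where d2: "d2 > 0" "\<And>x. dist x y < d2 \<Longrightarrow> dist (pd i (pd j f) x) (pd i (pd j f) y) < e"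
    using c2 e unfolding continuous_at_eps_delta by blast
  define t where "t = Min {r, d1, d2} / 3"
  have t: "0 < t" "2*t < r" "2*t < d1" "2*t < d2" using r d1 d2 unfolding t_def by auto
  obtain P where P: "norm (P - y) \<le> 2*t"
    "f (y + t *\<^sub>R axis i 1 + t *\<^sub>R axis j 1) - f (y + t *\<^sub>R axis i 1) - f (y + t *\<^sub>R axis j 1) + f y
       = t^2 * pd j (pd i f) P"
    using delta_rep[OF U sm r(2) t(1,2)] by blast
  obtain Q where Q: "norm (Q - y) \<le> 2*t"
    "f (y + t *\<^sub>R axis j 1 + t *\<^sub>R axis i 1) - f (y + t *\<^sub>R axis j 1) - f (y + t *\<^sub>R axis i 1) + f y
       = t^2 * pd i (pd j f) Q"
    using delta_rep[OF U sm r(2) t(1,2), of j i] by blast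
  have sw: "y + t *\<^sub>R axis j 1 + t *\<^sub>R axis i 1 = y + t *\<^sub>R axis i 1 + t *\<^sub>R axis j (1::real)"
    by (simp add: algebra_simps)
  have "t^2 * pd j (pd i f) P = t^2 * pd i (pd j f) Q" using P(2) Q(2)[unfolded sw] by linarith
  then have eq: "pd j (pd i f) P = pd i (pd j f) Q" using t(1) by simp
  have "dist (pd j (pd i f) P) (pd j (pd i f) y) < e" using d1(2)[of P] P(1) t by (simp add: dist_norm)
  moreover have "dist (pd i (pd j f) Q) (pd i (pd j f) y) < e" using d2(2)[of Q] Q(1) t by (simp add: dist_norm)
  ultimately show False using eq abs_contra unfolding e_def dist_real_def by metis
qed


lemma pd_const: "pd i (\<lambda>x::real^'n::finite. c) y = 0"
proof -
  have "((\<lambda>x::real^'n. c) has_derivative (\<lambda>h. 0)) (at y)" by simp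
  from pd_eq[OF this] show ?thesis by simp
qed

lemma det_diff:
  fixes F :: "'n::finite \<Rightarrow> 'n \<Rightarrow> real^'m::finite \<Rightarrow> real"
  assumes "\<And>a b. F a b differentiable (at y)"
  shows "(\<lambda>x. det (\<chi> a b. F a b x)) differentiable (at y)"
  unfolding det_def
  apply simp
  apply (rule diff_sum_at)
  apply (rule differentiable_mult)
   apply simp
  apply (rule diff_prod_at)
  using assms apply simp
  done

lemma mat_inv_props:
  fixes M :: "real^'n::finite^'n"
  assumes "\<And>v. M *v v = 0 \<Longrightarrow> v = 0"
  shows "M ** matrix_inv M = mat 1" "matrix_inv M ** M = mat 1" "det M \<noteq> 0"
proof -
  obtain B where "B ** M = mat 1" using matrix_left_invertible_ker assms by blast
  then have "M ** B = mat 1 \<and> B ** M = mat 1" using matrix_left_right_inverse by blast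
  then have "\<exists>B. M ** B = mat 1 \<and> B ** M = mat 1" by blast
  then have *: "M ** matrix_inv M = mat 1 \<and> matrix_inv M ** M = mat 1"
    unfolding matrix_inv_def by (rule someI_ex)
  then show "M ** matrix_inv M = mat 1" "matrix_inv M ** M = mat 1" by auto
  have "invertible M" unfolding invertible_def using * by blast
  then show "det M \<noteq> 0" by (simp add: invertible_det_nz)
qed

lemma mat_inv_cramer:
  fixes M :: "real^'n::finite^'n"
  assumes "M ** matrix_inv M = mat 1" "det M \<noteq> 0"
  shows "matrix_inv M $ i $ j = det (\<chi> a b. if b = i then axis j 1 $ a else M $ a $ b) / det M"
proof -
  define v where "v = matrix_inv M *v axis j 1"
  have "M *v v = axis j 1" unfolding v_def
    by (simp add: matrix_vector_mul_assoc assms(1))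
  then have "v = (\<chi> k. det (\<chi> a b. if b = k then axis j 1 $ a else M $ a $ b) / det M)"
    using cramer[OF assms(2)] by blast
  then have "v $ i = det (\<chi> a b. if b = i then axis j 1 $ a else M $ a $ b) / det M" by simp
  moreover have "v $ i = matrix_inv M $ i $ j"
    unfolding v_def matrix_vector_mult_def axis_def by (simp add: if_distrib cong: if_cong)
  ultimately show ?thesis by simp
qed

locale hs =
  fixes h :: "real^'n::finite \<Rightarrow> real" and U :: "(real^'n) set"
  assumes U: "open U" and sm: "smooth_on U h"
    and pos: "\<forall>y\<in>U. \<forall>v::real^'n. v \<noteq> 0 \<longrightarrow> gform (hess_metric h) y v v > 0"
begin

abbreviation "g \<equiv> hess_metric h"

lemma sm_g: "smooth_on U (g i j)"
  unfolding hess_metric_def using smooth_pd sm by blast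

lemma sm_dg: "smooth_on U (pd k (g i j))"
  using smooth_pd sm_g by blast

lemma sm_ddg: "smooth_on U (pd l (pd k (g i j)))"
  using smooth_pd sm_dg by blast

lemma gsym: "x \<in> U \<Longrightarrow> g i j x = g j i x"
  unfolding hess_metric_def using schwarz[OF U sm] by blast

lemma T12: "x \<in> U \<Longrightarrow> pd k (g i j) x = pd k (g j i) x"
  using pd_local[OF U, of x "g i j" "g j i"] gsym by blast

lemma T13: "x \<in> U \<Longrightarrow> pd k (g i j) x = pd i (g k j) x"
  unfolding hess_metric_def using schwarz[OF U smooth_pd[OF sm]] by blast

lemma B12: "y \<in> U \<Longrightarrow> pd l (pd k (g i j)) y = pd l (pd k (g j i)) y"
  using pd_local[OF U, of y "pd k (g i j)" "pd k (g j i)"] T12 by blast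

lemma B13: "y \<in> U \<Longrightarrow> pd l (pd k (g i j)) y = pd l (pd i (g k j)) y"
  using pd_local[OF U, of y "pd k (g i j)" "pd i (g k j)"] T13 by blast

lemma B34: "y \<in> U \<Longrightarrow> pd l (pd k (g i j)) y = pd k (pd l (g i j)) y"
  using schwarz[OF U sm_g] by blast

lemma ker: "x \<in> U \<Longrightarrow> metric_mat g x *v v = 0 \<Longrightarrow> v = 0"
proof (rule ccontr)
  assume x: "x \<in> U" and z: "metric_mat g x *v v = 0" and v: "v \<noteq> 0"
  have "\<And>i. (\<Sum>j\<in>UNIV. g i j x * v $ j) = 0"
  proof -
    fix i
    have "(metric_mat g x *v v) $ i = 0" using z by simp
    then show "(\<Sum>j\<in>UNIV. g i j x * v $ j) = 0"
      unfolding metric_mat_def matrix_vector_mult_def by simp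
  qed
  then have "(\<Sum>i\<in>UNIV. v $ i * (\<Sum>j\<in>UNIV. g i j x * v $ j)) = 0" by simp
  moreover have "(\<Sum>i\<in>UNIV. v $ i * (\<Sum>j\<in>UNIV. g i j x * v $ j)) = gform g x v v"
    unfolding gform_def sum_distrib_left by (rule sum.cong[OF refl], rule sum.cong[OF refl]) simp
  ultimately have "gform g x v v = 0" by simp
  then show False using pos x v by fastforce
qed

lemma Minv: "x \<in> U \<Longrightarrow> metric_mat g x ** matrix_inv (metric_mat g x) = mat 1"
  "x \<in> U \<Longrightarrow> matrix_inv (metric_mat g x) ** metric_mat g x = mat 1"
  "x \<in> U \<Longrightarrow> det (metric_mat g x) \<noteq> 0"
  using mat_inv_props[of "metric_mat g x"] ker by auto

lemma gG: "x \<in> U \<Longrightarrow> (\<Sum>r\<in>UNIV. g i r x * ginv g r j x) = (if i = j then 1 else 0)"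
proof -
  assume x: "x \<in> U"
  have "(metric_mat g x ** matrix_inv (metric_mat g x)) $ i $ j = mat 1 $ i $ j" using Minv(1)[OF x] by simp
  then show ?thesis unfolding matrix_matrix_mult_def ginv_def metric_mat_def mat_def by simp
qed

lemma Gg: "x \<in> U \<Longrightarrow> (\<Sum>r\<in>UNIV. ginv g i r x * g r j x) = (if i = j then 1 else 0)"
proof -
  assume x: "x \<in> U"
  have "(matrix_inv (metric_mat g x) ** metric_mat g x) $ i $ j = mat 1 $ i $ j" using Minv(2)[OF x] by simp
  then show ?thesis unfolding matrix_matrix_mult_def ginv_def metric_mat_def mat_def by simp
qed

lemma g_diff: "y \<in> U \<Longrightarrow> g i j differentiable (at y)"
  using smooth_diff_at[OF U sm_g] by blast

lemma dg_diff: "y \<in> U \<Longrightarrow> pd k (g i j) differentiable (at y)"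
  using smooth_diff_at[OF U sm_dg] by blast

lemma ginv_diff: "y \<in> U \<Longrightarrow> ginv g i j differentiable (at y)"
proof -
  assume y: "y \<in> U"
  define F where "F x = det (\<chi> a b. if b = i then axis j 1 $ a else g a b x) / det (\<chi> a b. g a b x)" for x
  have eq: "\<forall>x\<in>U. F x = ginv g i j x"
  proof
    fix x assume x: "x \<in> U"
    show "F x = ginv g i j x"
    proof -
      have e: "(\<chi> a b. if b = i then axis j 1 $ a else metric_mat g x $ a $ b) = (\<chi> a b. if b = i then axis j 1 $ a else g a b x)"
        unfolding metric_mat_def by (simp add: vec_eq_iff)
      have e2: "metric_mat g x = (\<chi> a b. g a b x)" unfolding metric_mat_def ..
      show ?thesis
        using mat_inv_cramer[OF Minv(1)[OF x] Minv(3)[OF x], of i j]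
        unfolding F_def ginv_def e by (simp only: e2)
    qed
  qed
  have d1: "(\<lambda>x. det (\<chi> a b. if b = i then axis j 1 $ a else g a b x)) differentiable (at y)"
    by (rule det_diff) (case_tac "b = i", auto simp: g_diff[OF y])
  have d2: "(\<lambda>x. det (\<chi> a b. g a b x)) differentiable (at y)"
    by (rule det_diff) (auto simp: g_diff[OF y])
  have nz: "det (\<chi> a b. g a b y) \<noteq> 0" using Minv(3)[OF y] by (simp add: metric_mat_def)
  have "F differentiable (at y)"
    unfolding F_def using d1 d2 nz by (auto intro!: differentiable_divide)
  then obtain F' where "(F has_derivative F') (at y)" unfolding differentiable_def by blast
  then have "(ginv g i j has_derivative F') (at y)"
    using has_derivative_transform_within_open[OF _ U y] eq by blast
  then show ?thesis unfolding differentiable_def by blast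
qed

end

definition Q4 :: "('n::finite \<Rightarrow> 'n \<Rightarrow> 'n \<Rightarrow> 'n \<Rightarrow> real) \<Rightarrow> ('n \<Rightarrow> real) \<Rightarrow> ('n \<Rightarrow> real) \<Rightarrow> ('n \<Rightarrow> real) \<Rightarrow> ('n \<Rightarrow> real) \<Rightarrow> real" where
  "Q4 K p q r s = (\<Sum>a\<in>UNIV. \<Sum>b\<in>UNIV. \<Sum>j\<in>UNIV. \<Sum>l\<in>UNIV. K a b j l * p a * q b * r j * s l)"

definition F4 :: "('n::finite \<Rightarrow> 'n \<Rightarrow> 'n \<Rightarrow> 'n \<Rightarrow> real) \<Rightarrow> ('n \<Rightarrow> 'n \<Rightarrow> real) \<Rightarrow> ('n \<Rightarrow> 'n \<Rightarrow> real) \<Rightarrow> real" where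
  "F4 K \<xi> \<eta> = (\<Sum>a\<in>UNIV. \<Sum>b\<in>UNIV. \<Sum>j\<in>UNIV. \<Sum>l\<in>UNIV. K a b j l * \<xi> a b * \<eta> j l)"

lemma F4_rank1: "F4 K (\<lambda>a b. p a * q b) (\<lambda>a b. p a * q b) = Q4 K p q p q"
  unfolding F4_def Q4_def by (simp add: mult_ac)

lemma F4_rank2: "F4 K (\<lambda>a b. p a * q b + p' a * q' b) (\<lambda>a b. p a * q b + p' a * q' b)
   = Q4 K p q p q + Q4 K p q p' q' + Q4 K p' q' p q + Q4 K p' q' p' q'"
  unfolding F4_def Q4_def by (simp add: algebra_simps sum.distrib)

lemma Q4_lin: "Q4 (\<lambda>a b j l. u * K1 a b j l - u * K2 a b j l) p q r s = u * Q4 K1 p q r s - u * Q4 K2 p q r s"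
  unfolding Q4_def by (simp add: algebra_simps sum_subtractf sum_distrib_left)

lemma sum_swap3: "(\<Sum>a\<in>UNIV. \<Sum>b\<in>UNIV. \<Sum>j\<in>UNIV. F a b j) = (\<Sum>j\<in>UNIV. \<Sum>b\<in>UNIV. \<Sum>a\<in>UNIV. F a b (j::'n::finite))"
proof -
  have "(\<Sum>a\<in>UNIV. \<Sum>b\<in>UNIV. \<Sum>j\<in>UNIV. F a b j) = (\<Sum>b\<in>UNIV. \<Sum>a\<in>UNIV. \<Sum>j\<in>UNIV. F a b j)"
    by (rule sum.swap)
  also have "\<dots> = (\<Sum>b\<in>UNIV. \<Sum>j\<in>UNIV. \<Sum>a\<in>UNIV. F a b j)"
    by (rule sum.cong[OF refl], rule sum.swap)
  also have "\<dots> = (\<Sum>j\<in>UNIV. \<Sum>b\<in>UNIV. \<Sum>a\<in>UNIV. F a b j)"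
    by (rule sum.swap)
  finally show ?thesis .
qed

lemma sum_swapP: "(\<Sum>a\<in>UNIV. \<Sum>b\<in>UNIV. \<Sum>j\<in>UNIV. \<Sum>l\<in>UNIV. F a b j l) = (\<Sum>j\<in>UNIV. \<Sum>l\<in>UNIV. \<Sum>a\<in>UNIV. \<Sum>b\<in>UNIV. F a b j (l::'n::finite))"
proof -
  have "(\<Sum>a\<in>UNIV. \<Sum>b\<in>UNIV. \<Sum>j\<in>UNIV. \<Sum>l\<in>UNIV. F a b j l) = (\<Sum>a\<in>UNIV. \<Sum>j\<in>UNIV. \<Sum>l\<in>UNIV. \<Sum>b\<in>UNIV. F a b j l)"
    by (rule sum.cong[OF refl], subst sum.swap, rule sum.cong[OF refl], rule sum.swap)
  also have "\<dots> = (\<Sum>j\<in>UNIV. \<Sum>l\<in>UNIV. \<Sum>a\<in>UNIV. \<Sum>b\<in>UNIV. F a b j l)"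
    by (subst sum.swap, rule sum.cong[OF refl], rule sum.swap)
  finally show ?thesis .
qed

lemma Q4_swap12:
  assumes "\<And>a b j l. K a b j l = K b a j l"
  shows "Q4 K p q r s = Q4 K q p r s"
proof -
  have "Q4 K q p r s = (\<Sum>b\<in>UNIV. \<Sum>a\<in>UNIV. \<Sum>j\<in>UNIV. \<Sum>l\<in>UNIV. K a b j l * q a * p b * r j * s l)"
    unfolding Q4_def by (rule sum.swap)
  also have "\<dots> = Q4 K p q r s"
    unfolding Q4_def by (intro sum.cong refl) (simp add: assms[of _ _] mult_ac)
  finally show ?thesis ..
qed

lemma Q4_swap34:
  assumes "\<And>a b j l. K a b j l = K a b l j"
  shows "Q4 K p q r s = Q4 K p q s r"
proof -
  have "Q4 K p q s r = (\<Sum>a\<in>UNIV. \<Sum>b\<in>UNIV. \<Sum>l\<in>UNIV. \<Sum>j\<in>UNIV. K a b j l * p a * q b * s j * r l)"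
    unfolding Q4_def by (rule sum.cong[OF refl], rule sum.cong[OF refl], rule sum.swap)
  also have "\<dots> = Q4 K p q r s"
    unfolding Q4_def by (intro sum.cong refl) (simp add: assms[of _ _] mult_ac)
  finally show ?thesis ..
qed

lemma Q4_swapP:
  assumes "\<And>a b j l. K a b j l = K j l a b"
  shows "Q4 K p q r s = Q4 K r s p q"
proof -
  have "Q4 K r s p q = (\<Sum>j\<in>UNIV. \<Sum>l\<in>UNIV. \<Sum>a\<in>UNIV. \<Sum>b\<in>UNIV. K a b j l * r a * s b * p j * q l)"
    unfolding Q4_def by (rule sum_swapP)
  also have "\<dots> = Q4 K p q r s"
    unfolding Q4_def by (intro sum.cong refl) (simp add: assms[of _ _] mult_ac)
  finally show ?thesis ..
qed

lemma Q4_swap13: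
  assumes "\<And>a b j l. K a b j l = K j b a l"
  shows "Q4 K p q r s = Q4 K r q p s"
proof -
  have "Q4 K r q p s = (\<Sum>j\<in>UNIV. \<Sum>b\<in>UNIV. \<Sum>a\<in>UNIV. \<Sum>l\<in>UNIV. K a b j l * r a * q b * p j * s l)"
    unfolding Q4_def by (rule sum_swap3)
  also have "\<dots> = Q4 K p q r s"
    unfolding Q4_def by (intro sum.cong refl) (simp add: assms[of _ _] mult_ac)
  finally show ?thesis ..
qed


lemma sum_swap_mult:
  fixes a :: "'a \<Rightarrow> real"
  assumes "finite A" "finite B"
  shows "(\<Sum>r\<in>A. a r * (\<Sum>j\<in>B. b r j * c j)) = (\<Sum>j\<in>B. (\<Sum>r\<in>A. a r * b r j) * c j)"
proof -
  have "(\<Sum>r\<in>A. a r * (\<Sum>j\<in>B. b r j * c j)) = (\<Sum>r\<in>A. \<Sum>j\<in>B. a r * b r j * c j)"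
    by (simp add: sum_distrib_left mult.assoc)
  also have "\<dots> = (\<Sum>j\<in>B. \<Sum>r\<in>A. a r * b r j * c j)" by (rule sum.swap)
  also have "\<dots> = (\<Sum>j\<in>B. (\<Sum>r\<in>A. a r * b r j) * c j)"
    by (simp add: sum_distrib_right)
  finally show ?thesis .
qed

lemma sum_rot3: "(\<Sum>j\<in>UNIV. \<Sum>k\<in>UNIV. \<Sum>l\<in>UNIV. F j k l) = (\<Sum>k\<in>UNIV. \<Sum>l\<in>UNIV. \<Sum>j\<in>UNIV. F j k (l::'n::finite))"
  by (subst sum.swap, rule sum.cong[OF refl], rule sum.swap)

lemma sdelta1: "(\<Sum>r\<in>UNIV. f r * (if r = j then 1 else 0)) = (f (j::'n::finite)::real)"
proof -
  have "(\<Sum>r\<in>UNIV. f r * (if r = j then 1 else 0)) = (\<Sum>r\<in>UNIV. if r = j then f r else 0)"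
    by (rule sum.cong) auto
  also have "\<dots> = f j" by simp
  finally show ?thesis .
qed
lemma sdelta2: "(\<Sum>r\<in>UNIV. f r * (if j = r then 1 else 0)) = (f (j::'n::finite)::real)"
  using sdelta1[of f j] by (simp add: eq_commute[of j])
lemma sdelta3: "(\<Sum>r\<in>UNIV. (if r = j then 1 else 0) * f r) = (f (j::'n::finite)::real)"
  using sdelta1[of f j] by (simp add: mult.commute)
lemma sdelta4: "(\<Sum>r\<in>UNIV. (if j = r then 1 else 0) * f r) = (f (j::'n::finite)::real)"
  using sdelta2[of f j] by (simp add: mult.commute)

locale alg =
  fixes gg G :: "'n::finite \<Rightarrow> 'n \<Rightarrow> real" and A :: "'n \<Rightarrow> 'n \<Rightarrow> 'n \<Rightarrow> real"
    and B :: "'n \<Rightarrow> 'n \<Rightarrow> 'n \<Rightarrow> 'n \<Rightarrow> real" and c :: real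
    and Gam :: "'n \<Rightarrow> 'n \<Rightarrow> 'n \<Rightarrow> real" and dGam :: "'n \<Rightarrow> 'n \<Rightarrow> 'n \<Rightarrow> 'n \<Rightarrow> real"
  assumes gsym: "\<And>i j. gg i j = gg j i"
    and gG: "\<And>i j. (\<Sum>r\<in>UNIV. gg i r * G r j) = (if i = j then 1 else 0)"
    and Gg: "\<And>i j. (\<Sum>r\<in>UNIV. G i r * gg r j) = (if i = j then 1 else 0)"
    and A12: "\<And>i j k. A i j k = A j i k" and A13: "\<And>i j k. A i j k = A k j i"
    and B12: "\<And>i j k l. B i j k l = B j i k l" and B13: "\<And>i j k l. B i j k l = B k j i l"
    and B34: "\<And>i j k l. B i j k l = B i j l k"
    and Gam_def: "\<And>i j k. Gam i j k = (1/2) * (\<Sum>l\<in>UNIV. G i l * A l j k)"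
    and dGam_def: "\<And>m i j k. dGam m i j k = (1/2) * (\<Sum>l\<in>UNIV. (- (\<Sum>a\<in>UNIV. \<Sum>b\<in>UNIV. G i a * A a b m * G b l)) * A l j k + G i l * B l j k m)"
    and pos: "\<And>v. v \<noteq> (\<lambda>_. 0) \<Longrightarrow> (\<Sum>i\<in>UNIV. \<Sum>j\<in>UNIV. gg i j * v i * v j) > 0"
    and hyp: "\<And>\<xi>. sym_tensor \<xi> \<Longrightarrow> \<xi> \<noteq> (\<lambda>i j. 0) \<Longrightarrow>
       (\<Sum>i\<in>UNIV. \<Sum>k\<in>UNIV. \<Sum>a\<in>UNIV. \<Sum>b\<in>UNIV. gg i a * gg k b * (\<Sum>j\<in>UNIV. \<Sum>l\<in>UNIV. (\<Sum>m\<in>UNIV. dGam m i j l * G m k) * \<xi> j l) * \<xi> a b)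
       / (\<Sum>i\<in>UNIV. \<Sum>k\<in>UNIV. \<Sum>a\<in>UNIV. \<Sum>b\<in>UNIV. gg i a * gg k b * \<xi> i k * \<xi> a b) = c"
begin

definition S where "S a k j l = (\<Sum>b\<in>UNIV. \<Sum>r\<in>UNIV. A a k b * G b r * A r j l)"
definition DW where "DW m p j k = (1/2) * (B p j k m - S p m j k)"

lemma A23: "A i j k = A i k j"
  by (rule trans[OF A12[of i j k]], rule trans[OF A13[of j i k]], rule A12[of k i j])

lemma B23: "B i j k l = B i k j l"
  by (rule trans[OF B12[of i j k l]], rule trans[OF B13[of j i k l]], rule B12[of k i j l])
lemma B24: "B i j k l = B i l k j"
  by (rule trans[OF B34[of i j k l]], rule trans[OF B23[of i j l k]], rule B34[of i l j k])
lemma B14: "B i j k l = B l j k i"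
  by (rule trans[OF B13[of i j k l]], rule trans[OF B34[of k j i l]], rule B13[of k j l i])

lemma Gsym: "G i j = G j i"
proof -
  have "G j i = (\<Sum>r\<in>UNIV. G r i * (if r = j then 1 else 0))" by (rule sdelta1[symmetric])
  also have "\<dots> = (\<Sum>r\<in>UNIV. G r i * (\<Sum>s\<in>UNIV. gg r s * G s j))" by (simp add: gG)
  also have "\<dots> = (\<Sum>s\<in>UNIV. (\<Sum>r\<in>UNIV. G r i * gg r s) * G s j)" by (rule sum_swap_mult) auto
  also have "\<dots> = (\<Sum>s\<in>UNIV. (if s = i then 1 else 0) * G s j)"
  proof (rule sum.cong[OF refl])
    fix s
    have "(\<Sum>r\<in>UNIV. G r i * gg r s) = (\<Sum>r\<in>UNIV. gg s r * G r i)"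
      by (simp add: gsym[of _ s] mult.commute)
    then show "(\<Sum>r\<in>UNIV. G r i * gg r s) * G s j = (if s = i then 1 else 0) * G s j"
      by (simp add: gG)
  qed
  also have "\<dots> = G i j" by (rule sdelta3)
  finally show ?thesis ..
qed

lemma contract: "(\<Sum>i\<in>UNIV. gg a i * (\<Sum>p\<in>UNIV. G i p * f p)) = f a"
proof -
  have "(\<Sum>i\<in>UNIV. gg a i * (\<Sum>p\<in>UNIV. G i p * f p)) = (\<Sum>p\<in>UNIV. (\<Sum>i\<in>UNIV. gg a i * G i p) * f p)"
    by (rule sum_swap_mult) auto
  also have "\<dots> = f a" by (simp add: gG sdelta4)
  finally show ?thesis .
qed

lemma dGam_G: "dGam m i j k = (\<Sum>p\<in>UNIV. G i p * DW m p j k)"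
proof -
  have e1: "(\<Sum>l\<in>UNIV. (- (\<Sum>a\<in>UNIV. \<Sum>b\<in>UNIV. G i a * A a b m * G b l)) * A l j k)
      = - (\<Sum>a\<in>UNIV. G i a * S a m j k)"
  proof -
    have "(\<Sum>l\<in>UNIV. (- (\<Sum>a\<in>UNIV. \<Sum>b\<in>UNIV. G i a * A a b m * G b l)) * A l j k)
       = - (\<Sum>l\<in>UNIV. \<Sum>a\<in>UNIV. \<Sum>b\<in>UNIV. G i a * A a b m * G b l * A l j k)"
      by (simp add: sum_distrib_right sum_negf)
    also have "\<dots> = - (\<Sum>b\<in>UNIV. \<Sum>a\<in>UNIV. \<Sum>l\<in>UNIV. G i a * A a b m * G b l * A l j k)"
      by (subst sum_swap3) (rule refl)
    also have "\<dots> = - (\<Sum>a\<in>UNIV. \<Sum>b\<in>UNIV. \<Sum>l\<in>UNIV. G i a * A a b m * G b l * A l j k)"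
      by (subst sum.swap) simp
    also have "\<dots> = - (\<Sum>a\<in>UNIV. G i a * S a m j k)"
      unfolding S_def by (simp add: sum_distrib_left A23[of _ m] mult.assoc)
    finally show ?thesis .
  qed
  have "dGam m i j k = (1/2) * (- (\<Sum>a\<in>UNIV. G i a * S a m j k) + (\<Sum>l\<in>UNIV. G i l * B l j k m))"
    unfolding dGam_def sum.distrib e1 ..
  also have "\<dots> = (\<Sum>p\<in>UNIV. G i p * DW m p j k)"
    unfolding DW_def sum_distrib_left right_diff_distrib sum_subtractf sum.distrib
    by (simp add: algebra_simps sum_divide_distrib)
  finally show ?thesis .
qed

lemma Gam_G: "Gam i j k = (\<Sum>p\<in>UNIV. G i p * ((1/2) * A p j k))"
  unfolding Gam_def by (simp add: sum_distrib_left mult_ac)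

lemma low_dGam: "(\<Sum>i\<in>UNIV. gg a i * dGam m i j k) = DW m a j k"
  unfolding dGam_G by (rule contract)

lemma low_Gam: "(\<Sum>i\<in>UNIV. gg a i * Gam i j k) = (1/2) * A a j k"
  unfolding Gam_G by (rule contract)

end

lemma sum_rot4: "(\<Sum>i\<in>UNIV. \<Sum>j\<in>UNIV. \<Sum>k\<in>UNIV. \<Sum>l\<in>UNIV. F i j k l) = (\<Sum>j\<in>UNIV. \<Sum>k\<in>UNIV. \<Sum>l\<in>UNIV. \<Sum>i\<in>UNIV. F i j k (l::'n::finite))"
  apply (rule trans[OF sum.swap])
  apply (rule sum.cong[OF refl])
  apply (rule trans[OF sum.swap])
  apply (rule sum.cong[OF refl])
  apply (rule sum.swap)
  done

lemma sum_lin4: "(\<Sum>a\<in>UNIV. \<Sum>j\<in>UNIV. \<Sum>k\<in>UNIV. \<Sum>l\<in>UNIV. u * f a j k l + v * g a j k l)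
  = u * (\<Sum>a\<in>UNIV. \<Sum>j\<in>UNIV. \<Sum>k\<in>UNIV. \<Sum>l\<in>UNIV. f a j k l) + v * (\<Sum>a\<in>UNIV. \<Sum>j\<in>UNIV. \<Sum>k\<in>UNIV. \<Sum>l\<in>UNIV. g a j k (l::'n::finite)::real)"
  by (simp add: sum.distrib sum_distrib_left)

context alg begin

definition Rmx where "Rmx i j k l = dGam k i l j - dGam l i k j + (\<Sum>m\<in>UNIV. Gam i k m * Gam m l j - Gam i l m * Gam m k j)"

definition gf where "gf p r = (\<Sum>i\<in>UNIV. \<Sum>j\<in>UNIV. gg i j * p i * r j)"

lemma half_AGam: "(\<Sum>m\<in>UNIV. (1/2) * A a k m * Gam m l j) = (1/4) * S a k l j"
  unfolding Gam_def S_def by (simp add: sum_distrib_left sum_distrib_right mult_ac)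

lemma RL: "(\<Sum>i\<in>UNIV. gg i a * Rmx i j k l) = -(1/4) * S a k l j + (1/4) * S a l k j"
proof -
  have h1: "(\<Sum>i\<in>UNIV. gg a i * (\<Sum>m\<in>UNIV. Gam i k m * Gam m l j)) = (\<Sum>m\<in>UNIV. (\<Sum>i\<in>UNIV. gg a i * Gam i k m) * Gam m l j)"
    by (rule sum_swap_mult) auto
  have h2: "(\<Sum>i\<in>UNIV. gg a i * (\<Sum>m\<in>UNIV. Gam i l m * Gam m k j)) = (\<Sum>m\<in>UNIV. (\<Sum>i\<in>UNIV. gg a i * Gam i l m) * Gam m k j)"
    by (rule sum_swap_mult) auto
  have "(\<Sum>i\<in>UNIV. gg i a * Rmx i j k l) =
     (\<Sum>i\<in>UNIV. gg a i * dGam k i l j) - (\<Sum>i\<in>UNIV. gg a i * dGam l i k j)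
     + ((\<Sum>i\<in>UNIV. gg a i * (\<Sum>m\<in>UNIV. Gam i k m * Gam m l j)) - (\<Sum>i\<in>UNIV. gg a i * (\<Sum>m\<in>UNIV. Gam i l m * Gam m k j)))"
  proof -
    have r: "\<And>i. Rmx i j k l = dGam k i l j - dGam l i k j + ((\<Sum>m\<in>UNIV. Gam i k m * Gam m l j) - (\<Sum>m\<in>UNIV. Gam i l m * Gam m k j))"
      unfolding Rmx_def by (simp only: sum_subtractf)
    have "\<And>i. gg i a * Rmx i j k l = gg a i * dGam k i l j - gg a i * dGam l i k j + (gg a i * (\<Sum>m\<in>UNIV. Gam i k m * Gam m l j) - gg a i * (\<Sum>m\<in>UNIV. Gam i l m * Gam m k j))"
      unfolding r gsym[of _ a] by (simp only: distrib_left right_diff_distrib)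
    then show ?thesis by (simp only: sum.distrib sum_subtractf)
  qed
  also have "\<dots> = DW k a l j - DW l a k j + ((\<Sum>m\<in>UNIV. (1/2) * A a k m * Gam m l j) - (\<Sum>m\<in>UNIV. (1/2) * A a l m * Gam m k j))"
    unfolding h1 h2 low_dGam low_Gam ..
  also have "\<dots> = -(1/4) * S a k l j + (1/4) * S a l k j"
    unfolding half_AGam DW_def using B24[of a l j k] by (simp add: field_simps)
  finally show ?thesis .
qed

lemma numer: "(\<Sum>a\<in>UNIV. \<Sum>i\<in>UNIV. \<Sum>j\<in>UNIV. \<Sum>k\<in>UNIV. \<Sum>l\<in>UNIV. gg i a * Rmx i j k l * X k * Y l * Y j * X a)
   = -(1/4) * Q4 S X X Y Y + (1/4) * Q4 S X Y X Y"
proof -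
  have "(\<Sum>a\<in>UNIV. \<Sum>i\<in>UNIV. \<Sum>j\<in>UNIV. \<Sum>k\<in>UNIV. \<Sum>l\<in>UNIV. gg i a * Rmx i j k l * X k * Y l * Y j * X a)
     = (\<Sum>a\<in>UNIV. \<Sum>j\<in>UNIV. \<Sum>k\<in>UNIV. \<Sum>l\<in>UNIV. (\<Sum>i\<in>UNIV. gg i a * Rmx i j k l) * (X k * Y l * Y j * X a))"
    apply (rule sum.cong[OF refl])
    apply (subst sum_rot4)
    apply (simp add: sum_distrib_right mult.assoc)
    done
  also have "\<dots> = (\<Sum>a\<in>UNIV. \<Sum>j\<in>UNIV. \<Sum>k\<in>UNIV. \<Sum>l\<in>UNIV. (-(1/4) * S a k l j + (1/4) * S a l k j) * (X k * Y l * Y j * X a))"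
    by (simp add: RL)
  also have "\<dots> = -(1/4) * (\<Sum>a\<in>UNIV. \<Sum>j\<in>UNIV. \<Sum>k\<in>UNIV. \<Sum>l\<in>UNIV. S a k l j * (X k * Y l * Y j * X a))
      + (1/4) * (\<Sum>a\<in>UNIV. \<Sum>j\<in>UNIV. \<Sum>k\<in>UNIV. \<Sum>l\<in>UNIV. S a l k j * (X k * Y l * Y j * X a))"
    by (simp only: distrib_right mult.assoc sum_lin4)
  also have "(\<Sum>a\<in>UNIV. \<Sum>j\<in>UNIV. \<Sum>k\<in>UNIV. \<Sum>l\<in>UNIV. S a k l j * (X k * Y l * Y j * X a)) = Q4 S X X Y Y"
    unfolding Q4_def
    apply (rule sum.cong[OF refl])
    apply (rule trans[OF sum_rot3])
    apply (simp add: mult_ac)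
    done
  also have "(\<Sum>a\<in>UNIV. \<Sum>j\<in>UNIV. \<Sum>k\<in>UNIV. \<Sum>l\<in>UNIV. S a l k j * (X k * Y l * Y j * X a)) = Q4 S X Y X Y"
    unfolding Q4_def
    apply (rule sum.cong[OF refl])
    apply (rule trans[OF sum_swap3])
    apply (simp add: mult_ac)
    done
  finally show ?thesis .
qed

end

context alg begin

lemma low_dGam': "(\<Sum>i\<in>UNIV. gg i a * dGam m i j k) = DW m a j k"
  using low_dGam[of a m j k] by (simp add: gsym[of _ a])

lemma TQ_F4: "(\<Sum>i\<in>UNIV. \<Sum>k\<in>UNIV. \<Sum>a\<in>UNIV. \<Sum>b\<in>UNIV. gg i a * gg k b * (\<Sum>j\<in>UNIV. \<Sum>l\<in>UNIV. (\<Sum>m\<in>UNIV. dGam m i j l * G m k) * \<xi> j l) * \<xi> a b)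
   = F4 (\<lambda>a b j l. DW b a j l) \<xi> \<xi>"
proof -
  define W where "W i b = (\<Sum>j\<in>UNIV. \<Sum>l\<in>UNIV. dGam b i j l * \<xi> j l)" for i b
  have s1: "(\<Sum>k\<in>UNIV. gg k b * (\<Sum>j\<in>UNIV. \<Sum>l\<in>UNIV. (\<Sum>m\<in>UNIV. dGam m i j l * G m k) * \<xi> j l)) = W i b" for i b
  proof -
    have z: "(\<Sum>j\<in>UNIV. \<Sum>l\<in>UNIV. (\<Sum>m\<in>UNIV. dGam m i j l * G m k) * \<xi> j l) = (\<Sum>m\<in>UNIV. G m k * W i m)" for k
    proof -
      have "(\<Sum>j\<in>UNIV. \<Sum>l\<in>UNIV. (\<Sum>m\<in>UNIV. dGam m i j l * G m k) * \<xi> j l) = (\<Sum>j\<in>UNIV. \<Sum>l\<in>UNIV. \<Sum>m\<in>UNIV. G m k * (dGam m i j l * \<xi> j l))"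
        by (simp add: sum_distrib_right sum_distrib_left mult_ac)
      also have "\<dots> = (\<Sum>l\<in>UNIV. \<Sum>m\<in>UNIV. \<Sum>j\<in>UNIV. G m k * (dGam m i j l * \<xi> j l))"
        by (rule sum_rot3)
      also have "\<dots> = (\<Sum>m\<in>UNIV. \<Sum>j\<in>UNIV. \<Sum>l\<in>UNIV. G m k * (dGam m i j l * \<xi> j l))"
        by (rule sum_rot3)
      also have "\<dots> = (\<Sum>m\<in>UNIV. G m k * W i m)"
        unfolding W_def by (simp add: sum_distrib_left)
      finally show ?thesis .
    qed
    have "(\<Sum>k\<in>UNIV. gg k b * (\<Sum>m\<in>UNIV. G m k * W i m)) = (\<Sum>m\<in>UNIV. (\<Sum>k\<in>UNIV. gg k b * G m k) * W i m)"
      by (rule sum_swap_mult) auto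
    also have "\<dots> = W i b"
    proof -
      have "\<And>m. (\<Sum>k\<in>UNIV. gg k b * G m k) = (if m = b then 1 else 0)"
        using Gg by (simp add: mult.commute)
      then show ?thesis by (simp add: sdelta3)
    qed
    finally show ?thesis unfolding z .
  qed
  have "(\<Sum>i\<in>UNIV. \<Sum>k\<in>UNIV. \<Sum>a\<in>UNIV. \<Sum>b\<in>UNIV. gg i a * gg k b * (\<Sum>j\<in>UNIV. \<Sum>l\<in>UNIV. (\<Sum>m\<in>UNIV. dGam m i j l * G m k) * \<xi> j l) * \<xi> a b)
      = (\<Sum>i\<in>UNIV. \<Sum>a\<in>UNIV. \<Sum>b\<in>UNIV. \<Sum>k\<in>UNIV. (gg i a * \<xi> a b) * (gg k b * (\<Sum>j\<in>UNIV. \<Sum>l\<in>UNIV. (\<Sum>m\<in>UNIV. dGam m i j l * G m k) * \<xi> j l)))"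
    apply (rule sum.cong[OF refl])
    apply (rule trans[OF sum_rot3])
    apply (simp add: mult_ac)
    done
  also have "\<dots> = (\<Sum>i\<in>UNIV. \<Sum>a\<in>UNIV. \<Sum>b\<in>UNIV. (gg i a * \<xi> a b) * W i b)"
    by (simp add: sum_distrib_left[symmetric] s1)
  also have "\<dots> = (\<Sum>a\<in>UNIV. \<Sum>b\<in>UNIV. \<Sum>i\<in>UNIV. \<xi> a b * (gg i a * W i b))"
    apply (rule trans[OF sum_rot3])
    apply (simp add: mult_ac)
    done
  also have "\<dots> = (\<Sum>a\<in>UNIV. \<Sum>b\<in>UNIV. \<xi> a b * (\<Sum>j\<in>UNIV. \<Sum>l\<in>UNIV. DW b a j l * \<xi> j l))"
  proof -
    have "(\<Sum>i\<in>UNIV. gg i a * W i b) = (\<Sum>j\<in>UNIV. \<Sum>l\<in>UNIV. DW b a j l * \<xi> j l)" for a b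
    proof -
      have "(\<Sum>i\<in>UNIV. gg i a * W i b) = (\<Sum>i\<in>UNIV. \<Sum>j\<in>UNIV. \<Sum>l\<in>UNIV. (gg i a * dGam b i j l) * \<xi> j l)"
        unfolding W_def by (simp add: sum_distrib_left mult_ac)
      also have "\<dots> = (\<Sum>j\<in>UNIV. \<Sum>l\<in>UNIV. \<Sum>i\<in>UNIV. (gg i a * dGam b i j l) * \<xi> j l)"
        by (rule sum_rot3)
      also have "\<dots> = (\<Sum>j\<in>UNIV. \<Sum>l\<in>UNIV. DW b a j l * \<xi> j l)"
        by (simp add: sum_distrib_right[symmetric] low_dGam')
      finally show ?thesis .
    qed
    then show ?thesis by (simp add: sum_distrib_left[symmetric])
  qed
  also have "\<dots> = F4 (\<lambda>a b j l. DW b a j l) \<xi> \<xi>"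
    unfolding F4_def by (simp add: sum_distrib_left mult_ac)
  finally show ?thesis .
qed

lemma TT_F4: "(\<Sum>i\<in>UNIV. \<Sum>k\<in>UNIV. \<Sum>a\<in>UNIV. \<Sum>b\<in>UNIV. gg i a * gg k b * \<xi> i k * \<xi> a b)
   = F4 (\<lambda>a b j l. gg a j * gg b l) \<xi> \<xi>"
  unfolding F4_def ..

lemma Q4_Kt: "Q4 (\<lambda>a b j l. gg a j * gg b l) p q r s = gf p r * gf q s"
proof -
  have "Q4 (\<lambda>a b j l. gg a j * gg b l) p q r s = (\<Sum>a\<in>UNIV. \<Sum>j\<in>UNIV. \<Sum>b\<in>UNIV. \<Sum>l\<in>UNIV. (gg a j * p a * r j) * (gg b l * q b * s l))"
    unfolding Q4_def
    apply (rule sum.cong[OF refl])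
    apply (rule trans[OF sum.swap])
    apply (simp add: mult_ac)
    done
  also have "\<dots> = (\<Sum>a\<in>UNIV. \<Sum>j\<in>UNIV. (gg a j * p a * r j) * gf q s)"
    unfolding gf_def by (simp only: sum_distrib_left)
  also have "\<dots> = gf p r * gf q s"
    unfolding gf_def[of p r] by (simp only: sum_distrib_right)
  finally show ?thesis .
qed

lemma Q4_Kq: "Q4 (\<lambda>a b j l. DW b a j l) p q r s = (1/2) * Q4 (\<lambda>a b j l. B a j l b) p q r s - (1/2) * Q4 S p q r s"
proof -
  have "(\<lambda>a b j l. DW b a j l) = (\<lambda>a b j l. (1/2) * B a j l b - (1/2) * S a b j l)"
    unfolding DW_def by (intro ext) (simp only: right_diff_distrib)
  then show ?thesis by (simp only: Q4_lin)
qed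

lemma S12: "S a b j l = S b a j l" unfolding S_def using A12[of a b] by simp
lemma S34: "S a b j l = S a b l j" unfolding S_def using A23 by simp
lemma SP: "S a b j l = S j l a b"
proof -
  have "S j l a b = (\<Sum>r\<in>UNIV. \<Sum>c\<in>UNIV. A j l c * G c r * A r a b)"
    unfolding S_def by (rule sum.swap)
  also have "\<dots> = S a b j l"
    unfolding S_def
  proof (rule sum.cong[OF refl], rule sum.cong[OF refl])
    fix c r
    have "A j l r = A r j l" by (rule trans[OF A13[of j l r]], rule A23)
    moreover have "A c a b = A a b c" by (rule trans[OF A13[of c a b]], rule A12)
    ultimately show "A j l r * G r c * A c a b = A a b c * G c r * A r j l"
      using Gsym[of r c] by simp
  qed
  finally show ?thesis ..
qed

lemma gf_sym: "gf p r = gf r p"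
  unfolding gf_def
  apply (rule trans[OF sum.swap])
  apply (simp add: gsym[of _ _] mult_ac)
  done

end

context alg begin

lemma gf_lin: "gf (\<lambda>i. a * p i + b * q i) (\<lambda>i. a * p i + b * q i) = a*a*gf p p + a*b*gf p q + b*a*gf q p + b*b*gf q q"
  unfolding gf_def by (simp add: algebra_simps sum.distrib sum_distrib_left)

lemma hypE:
  assumes "sym_tensor \<xi>" "F4 (\<lambda>a b j l. gg a j * gg b l) \<xi> \<xi> \<noteq> 0"
  shows "F4 (\<lambda>a b j l. DW b a j l) \<xi> \<xi> = c * F4 (\<lambda>a b j l. gg a j * gg b l) \<xi> \<xi>"
proof -
  have "\<xi> \<noteq> (\<lambda>i j. 0)" using assms(2) unfolding F4_def by auto
  from hyp[OF assms(1) this] have "F4 (\<lambda>a b j l. DW b a j l) \<xi> \<xi> / F4 (\<lambda>a b j l. gg a j * gg b l) \<xi> \<xi> = c"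
    unfolding TQ_F4 TT_F4 .
  then show ?thesis using assms(2) by (simp add: field_simps)
qed

lemma final:
  fixes X Y :: "'n \<Rightarrow> real"
  assumes Y0: "Y \<noteq> (\<lambda>_. 0)" and ind: "\<forall>t. X \<noteq> (\<lambda>i. t * Y i)"
  shows "(\<Sum>a\<in>UNIV. \<Sum>i\<in>UNIV. \<Sum>j\<in>UNIV. \<Sum>k\<in>UNIV. \<Sum>l\<in>UNIV. gg i a * Rmx i j k l * X k * Y l * Y j * X a)
      / (gf X X * gf Y Y - (gf X Y)^2) = -c/4"
proof -
  have X0: "X \<noteq> (\<lambda>_. 0)" using ind[rule_format, of 0] by simp
  have gX: "gf X X > 0" using pos[OF X0] unfolding gf_def .
  have gY: "gf Y Y > 0" using pos[OF Y0] unfolding gf_def .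
  have gXY: "gf Y X = gf X Y" by (rule gf_sym)
  define v where "v i = gf Y Y * X i + (- gf X Y) * Y i" for i
  have v0: "v \<noteq> (\<lambda>_. 0)"
  proof
    assume v: "v = (\<lambda>_. 0)"
    have "gf Y Y * X i = gf X Y * Y i" for i
    proof -
      have "v i = 0" using v by simp
      then show ?thesis unfolding v_def by simp
    qed
    then have "X = (\<lambda>i. (gf X Y / gf Y Y) * Y i)" using gY by (auto simp: fun_eq_iff field_simps)
    then show False using ind by blast
  qed
  have "gf v v > 0" using pos[OF v0] unfolding gf_def .
  moreover have "gf v v = gf Y Y * (gf X X * gf Y Y - (gf X Y)^2)"
    unfolding v_def gf_lin gXY by (simp add: algebra_simps power2_eq_square)
  ultimately have D: "gf X X * gf Y Y - (gf X Y)^2 > 0" using gY by (simp add: zero_less_mult_iff)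
  let ?Kt = "\<lambda>a b j l. gg a j * gg b l"
  let ?Kq = "\<lambda>a b j l. DW b a j l"
  let ?bq = "\<lambda>a b j l. B a j l b"
  have bq12: "\<And>a b j l. ?bq a b j l = ?bq b a j l" using B14 by simp
  have bq34: "\<And>a b j l. ?bq a b j l = ?bq a b l j" using B23 by simp
  have bqP: "\<And>a b j l. ?bq a b j l = ?bq j l a b" by (simp add: trans[OF B12 B34])
  have bq13: "\<And>a b j l. ?bq a b j l = ?bq j b a l" using B12 by simp
  have e: "\<And>p q r s. Q4 ?Kq p q r s = (1/2) * Q4 ?bq p q r s - (1/2) * Q4 S p q r s" by (rule Q4_Kq)
  have sym1: "sym_tensor (\<lambda>a b. X a * X b)" "sym_tensor (\<lambda>a b. Y a * Y b)"
    "sym_tensor (\<lambda>a b. X a * X b + Y a * Y b)" "sym_tensor (\<lambda>a b. X a * Y b + Y a * X b)"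
    unfolding sym_tensor_def by (auto simp: mult.commute add.commute)
  have E1: "Q4 ?Kq X X X X = c * (gf X X * gf X X)"
    using hypE[OF sym1(1)] gX unfolding F4_rank1 Q4_Kt by simp
  have E2: "Q4 ?Kq Y Y Y Y = c * (gf Y Y * gf Y Y)"
    using hypE[OF sym1(2)] gY unfolding F4_rank1 Q4_Kt by simp
  have sq: "0 \<le> gf X Y * gf X Y" "0 < gf X X * gf X X" "0 < gf Y Y * gf Y Y" "0 < gf X X * gf Y Y" "0 < gf Y Y * gf X X"
    using gX gY by simp_all
  have T3: "gf X X * gf X X + gf X Y * gf X Y + gf Y X * gf Y X + gf Y Y * gf Y Y > 0"
    using sq unfolding gXY by linarith
  have E3: "Q4 ?Kq X X X X + Q4 ?Kq X X Y Y + Q4 ?Kq Y Y X X + Q4 ?Kq Y Y Y Y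
     = c * (gf X X * gf X X + gf X Y * gf X Y + gf Y X * gf Y X + gf Y Y * gf Y Y)"
    using hypE[OF sym1(3)] T3 unfolding F4_rank2 Q4_Kt by simp
  have T4: "gf X X * gf Y Y + gf X Y * gf Y X + gf Y X * gf X Y + gf Y Y * gf X X > 0"
    using sq unfolding gXY by linarith
  have E4: "Q4 ?Kq X Y X Y + Q4 ?Kq X Y Y X + Q4 ?Kq Y X X Y + Q4 ?Kq Y X Y X
     = c * (gf X X * gf Y Y + gf X Y * gf Y X + gf Y X * gf X Y + gf Y Y * gf X X)"
    using hypE[OF sym1(4)] T4 unfolding F4_rank2 Q4_Kt by simp
  have b1: "Q4 ?bq Y Y X X = Q4 ?bq X X Y Y" by (rule Q4_swapP[OF bqP, symmetric])
  have b2: "Q4 ?bq X Y X Y = Q4 ?bq X X Y Y"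
    using Q4_swap13[OF bq13, where p=X and q=X and r=Y and s=Y] Q4_swap12[OF bq12, where p=Y and q=X and r=X and s=Y] by simp
  have b3: "Q4 ?bq X Y Y X = Q4 ?bq X Y X Y" by (rule Q4_swap34[OF bq34, symmetric])
  have b4: "Q4 ?bq Y X X Y = Q4 ?bq X Y X Y" by (rule Q4_swap12[OF bq12, symmetric])
  have b5: "Q4 ?bq Y X Y X = Q4 ?bq X Y Y X" by (rule Q4_swap12[OF bq12, symmetric])
  have s1: "Q4 S Y Y X X = Q4 S X X Y Y" by (rule Q4_swapP[OF SP, symmetric])
  have s3: "Q4 S X Y Y X = Q4 S X Y X Y" by (rule Q4_swap34[OF S34, symmetric])
  have s4: "Q4 S Y X X Y = Q4 S X Y X Y" by (rule Q4_swap12[OF S12, symmetric])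
  have s5: "Q4 S Y X Y X = Q4 S X Y Y X" by (rule Q4_swap12[OF S12, symmetric])
  have key: "Q4 S X X Y Y - Q4 S X Y X Y = c * (gf X X * gf Y Y - (gf X Y)^2)"
  proof -
    note E = E1 E2 E3 E4
    note E = E[unfolded e b1 b2 b3 b4 b5 s1 s3 s4 s5 gXY]
    from E show ?thesis by (simp add: algebra_simps power2_eq_square)
  qed
  show ?thesis unfolding numer
    using D key by (simp add: field_simps)
qed

end

context hs begin

lemma dG:
  assumes y: "y \<in> U"
  shows "pd k (ginv g i m) y = - (\<Sum>a\<in>UNIV. \<Sum>b\<in>UNIV. ginv g i a y * pd k (g a b) y * ginv g b m y)"
proof -
  let ?dG = "\<lambda>r. pd k (ginv g i r) y"
  have star: "(\<Sum>r\<in>UNIV. ?dG r * g r j y) = - (\<Sum>r\<in>UNIV. ginv g i r y * pd k (g r j) y)" for j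
  proof -
    have "pd k (\<lambda>x. \<Sum>r\<in>UNIV. ginv g i r x * g r j x) y = pd k (\<lambda>x. if i = j then 1 else 0) y"
      by (rule pd_local[OF U y]) (simp add: Gg)
    also have "\<dots> = 0" by (rule pd_const)
    finally have z: "pd k (\<lambda>x. \<Sum>r\<in>UNIV. ginv g i r x * g r j x) y = 0" .
    have "pd k (\<lambda>x. \<Sum>r\<in>UNIV. ginv g i r x * g r j x) y = (\<Sum>r\<in>UNIV. pd k (\<lambda>x. ginv g i r x * g r j x) y)"
      by (rule pd_sum) (intro differentiable_mult ginv_diff[OF y] g_diff[OF y])
    also have "\<dots> = (\<Sum>r\<in>UNIV. ?dG r * g r j y + ginv g i r y * pd k (g r j) y)"
      by (rule sum.cong[OF refl], rule pd_mult[OF ginv_diff[OF y] g_diff[OF y]])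
    finally show ?thesis using z by (simp add: sum.distrib eq_neg_iff_add_eq_0)
  qed
  have "?dG m = (\<Sum>r\<in>UNIV. ?dG r * (if r = m then 1 else 0))" by (rule sdelta1[symmetric])
  also have "\<dots> = (\<Sum>r\<in>UNIV. ?dG r * (\<Sum>j\<in>UNIV. g r j y * ginv g j m y))" by (simp add: gG[OF y])
  also have "\<dots> = (\<Sum>j\<in>UNIV. (\<Sum>r\<in>UNIV. ?dG r * g r j y) * ginv g j m y)" by (rule sum_swap_mult) auto
  also have "\<dots> = (\<Sum>j\<in>UNIV. - (\<Sum>r\<in>UNIV. ginv g i r y * pd k (g r j) y) * ginv g j m y)" by (simp only: star)
  also have "\<dots> = - (\<Sum>j\<in>UNIV. \<Sum>r\<in>UNIV. ginv g i r y * pd k (g r j) y * ginv g j m y)"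
    by (simp add: sum_distrib_right sum_negf)
  also have "\<dots> = - (\<Sum>a\<in>UNIV. \<Sum>b\<in>UNIV. ginv g i a y * pd k (g a b) y * ginv g b m y)"
    by (subst sum.swap) (rule refl)
  finally show ?thesis .
qed

lemma LC_U:
  assumes x: "x \<in> U"
  shows "LC g i j k x = (1/2) * (\<Sum>l\<in>UNIV. ginv g i l x * pd k (g l j) x)"
proof -
  have e1: "pd j (g l k) x = pd k (g l j) x" for l
    using T12[OF x, of j l k] T13[OF x, of j k l] T12[OF x, of k j l] by simp
  have e2: "pd l (g j k) x = pd k (g l j) x" for l
    using T13[OF x, of l j k] e1[of l] by simp
  show ?thesis unfolding LC_def using e1 e2 by simp
qed

lemma dLC:
  assumes y: "y \<in> U"
  shows "pd m (LC g i j k) y = (1/2) * (\<Sum>l\<in>UNIV. pd m (ginv g i l) y * pd k (g l j) y + ginv g i l y * pd m (pd k (g l j)) y)"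
proof -
  have d: "(\<lambda>x. ginv g i l x * pd k (g l j) x) differentiable (at y)" for l
    by (intro differentiable_mult ginv_diff[OF y] dg_diff[OF y])
  have "pd m (LC g i j k) y = pd m (\<lambda>x. (1/2) * (\<Sum>l\<in>UNIV. ginv g i l x * pd k (g l j) x)) y"
    by (rule pd_local[OF U y]) (simp add: LC_U)
  also have "\<dots> = (1/2) * pd m (\<lambda>x. \<Sum>l\<in>UNIV. ginv g i l x * pd k (g l j) x) y"
    by (rule pd_cmult, rule diff_sum_at, rule d)
  also have "\<dots> = (1/2) * (\<Sum>l\<in>UNIV. pd m (\<lambda>x. ginv g i l x * pd k (g l j) x) y)"
    by (subst pd_sum, rule d, rule refl)
  also have "\<dots> = (1/2) * (\<Sum>l\<in>UNIV. pd m (ginv g i l) y * pd k (g l j) y + ginv g i l y * pd m (pd k (g l j)) y)"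
    by (simp only: pd_mult[OF ginv_diff[OF y] dg_diff[OF y]])
  finally show ?thesis .
qed

lemma alg_at:
  assumes y: "y \<in> U"
    and hypc: "\<forall>\<xi>. sym_tensor \<xi> \<and> \<xi> \<noteq> (\<lambda>i j. 0) \<longrightarrow> hess_sec_curv g y \<xi> = c"
  shows "alg (\<lambda>i j. g i j y) (\<lambda>i j. ginv g i j y) (\<lambda>i j k. pd k (g i j) y) (\<lambda>i j k l. pd l (pd k (g i j)) y) c
     (\<lambda>i j k. LC g i j k y) (\<lambda>m i j k. pd m (LC g i j k) y)"
proof
  show "\<And>i j. g i j y = g j i y" using gsym[OF y] by blast
  show "\<And>i j. (\<Sum>r\<in>UNIV. g i r y * ginv g r j y) = (if i = j then 1 else 0)" using gG[OF y] by blast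
  show "\<And>i j. (\<Sum>r\<in>UNIV. ginv g i r y * g r j y) = (if i = j then 1 else 0)" using Gg[OF y] by blast
  show "\<And>i j k. pd k (g i j) y = pd k (g j i) y" using T12[OF y] by blast
  show "\<And>i j k. pd k (g i j) y = pd i (g k j) y" using T13[OF y] by blast
  show "\<And>i j k l. pd l (pd k (g i j)) y = pd l (pd k (g j i)) y" using B12[OF y] by blast
  show "\<And>i j k l. pd l (pd k (g i j)) y = pd l (pd i (g k j)) y" using B13[OF y] by blast
  show "\<And>i j k l. pd l (pd k (g i j)) y = pd k (pd l (g i j)) y" using B34[OF y] by blast
  show "\<And>i j k. LC g i j k y = (1/2) * (\<Sum>l\<in>UNIV. ginv g i l y * pd k (g l j) y)" using LC_U[OF y] by blast
  show "\<And>m i j k. pd m (LC g i j k) y = (1/2) * (\<Sum>l\<in>UNIV. (- (\<Sum>a\<in>UNIV. \<Sum>b\<in>UNIV. ginv g i a y * pd m (g a b) y * ginv g b l y)) * pd k (g l j) y + ginv g i l y * pd m (pd k (g l j)) y)"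
    using dLC[OF y] dG[OF y] by simp
  show "\<And>v. v \<noteq> (\<lambda>_. 0) \<Longrightarrow> (\<Sum>i\<in>UNIV. \<Sum>j\<in>UNIV. g i j y * v i * v j) > 0"
  proof -
    fix v :: "'n \<Rightarrow> real" assume v: "v \<noteq> (\<lambda>_. 0)"
    define V :: "real^'n" where "V = (\<chi> i. v i)"
    have "V \<noteq> 0" using v unfolding V_def by (auto simp: vec_eq_iff fun_eq_iff)
    then have "gform g y V V > 0" using pos y by blast
    then show "(\<Sum>i\<in>UNIV. \<Sum>j\<in>UNIV. g i j y * v i * v j) > 0" unfolding gform_def V_def by simp
  qed
  show "\<And>\<xi>. sym_tensor \<xi> \<Longrightarrow> \<xi> \<noteq> (\<lambda>i j. 0) \<Longrightarrow>
       (\<Sum>i\<in>UNIV. \<Sum>k\<in>UNIV. \<Sum>a\<in>UNIV. \<Sum>b\<in>UNIV. g i a y * g k b y * (\<Sum>j\<in>UNIV. \<Sum>l\<in>UNIV. (\<Sum>m\<in>UNIV. pd m (LC g i j l) y * ginv g m k y) * \<xi> j l) * \<xi> a b)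
       / (\<Sum>i\<in>UNIV. \<Sum>k\<in>UNIV. \<Sum>a\<in>UNIV. \<Sum>b\<in>UNIV. g i a y * g k b y * \<xi> i k * \<xi> a b) = c"
  proof -
    fix \<xi> :: "'n \<Rightarrow> 'n \<Rightarrow> real" assume "sym_tensor \<xi>" "\<xi> \<noteq> (\<lambda>i j. 0)"
    then have "hess_sec_curv g y \<xi> = c" using hypc by blast
    moreover have "gam g i j l = LC g i j l" for i j l by (rule ext) (simp add: gam_def)
    ultimately show "(\<Sum>i\<in>UNIV. \<Sum>k\<in>UNIV. \<Sum>a\<in>UNIV. \<Sum>b\<in>UNIV. g i a y * g k b y * (\<Sum>j\<in>UNIV. \<Sum>l\<in>UNIV. (\<Sum>m\<in>UNIV. pd m (LC g i j l) y * ginv g m k y) * \<xi> j l) * \<xi> a b)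
       / (\<Sum>i\<in>UNIV. \<Sum>k\<in>UNIV. \<Sum>a\<in>UNIV. \<Sum>b\<in>UNIV. g i a y * g k b y * \<xi> i k * \<xi> a b) = c"
      unfolding hess_sec_curv_def tinner_def Qhat_def Qup_def Qt_def by simp
  qed
qed

end

theorem corollary2:
  fixes h :: "real^'n \<Rightarrow> real" and U :: "(real^'n) set" and c :: real
  assumes "open U"
    and "smooth_on U h"
    and "\<forall>y\<in>U. \<forall>v::real^'n. v \<noteq> 0 \<longrightarrow> gform (hess_metric h) y v v > 0"
    and "\<forall>y\<in>U. \<forall>\<xi>. sym_tensor \<xi> \<and> \<xi> \<noteq> (\<lambda>i j. 0) \<longrightarrow>
           hess_sec_curv (hess_metric h) y \<xi> = c"
  shows "\<forall>y\<in>U. \<forall>X Y::real^'n. independent {X, Y} \<and> X \<noteq> Y \<longrightarrow>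
           sec_curv (hess_metric h) y X Y = - c / 4"
proof (intro ballI allI impI)
  fix y X Y
  assume y: "y \<in> U" and XY: "independent {X, Y::real^'n} \<and> X \<noteq> Y"
  interpret H: hs h U using assms(1-3) by unfold_locales
  let ?g = "hess_metric h"
  interpret AL: alg "\<lambda>i j. ?g i j y" "\<lambda>i j. ginv ?g i j y" "\<lambda>i j k. pd k (?g i j) y" "\<lambda>i j k l. pd l (pd k (?g i j)) y" c
     "\<lambda>i j k. LC ?g i j k y" "\<lambda>m i j k. pd m (LC ?g i j k) y"
    using H.alg_at[OF y] assms(4) y by blast
  have Y0: "(\<lambda>i. Y $ i) \<noteq> (\<lambda>_. 0)"
  proof
    assume "(\<lambda>i. Y $ i) = (\<lambda>_. 0)"
    then have "Y = 0" by (simp add: vec_eq_iff fun_eq_iff)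
    then show False using XY dependent_zero by blast
  qed
  have ind: "\<forall>t. (\<lambda>i. X $ i) \<noteq> (\<lambda>i. t * Y $ i)"
  proof (intro allI notI)
    fix t assume "(\<lambda>i. X $ i) = (\<lambda>i. t * Y $ i)"
    then have "X = t *\<^sub>R Y" by (simp add: vec_eq_iff fun_eq_iff)
    then show False using XY
      by (metis dependent_def insert_Diff_single insert_absorb2 insert_iff singleton_iff span_base span_mul)
  qed
  have R: "Rm ?g i j k l y = AL.Rmx i j k l" for i j k l
    unfolding Rm_def AL.Rmx_def ..
  have G: "gform ?g y P Q = AL.gf (\<lambda>i. P $ i) (\<lambda>i. Q $ i)" for P Q
    unfolding gform_def AL.gf_def ..
  show "sec_curv ?g y X Y = - c / 4"
    unfolding sec_curv_def R G using AL.final[OF Y0 ind] by simp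
qed


end
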